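(* Let $q>2$ be a prime power, $R=M_2(\mathbb F_q)$, $U_R=\mathrm{GL}_2(\mathbb F_q)$, $\alpha\in(0,1)$, and let $\pi$ be the stationary distribution of the Markov chain $(X^U_t)$ on $R$ defined below. Let $D=q^3+q^2-q+(q^2-1)(q^2-q)\alpha$. Then \[\pi(x)=\begin{cases}\dfrac{\alpha}{D}, & x\in U_R,\\[2mm] \dfrac{q^2\alpha}{(1+(q^2-1)\alpha)\,D}, & x\notin U_R,\ x\ne0,\\[2mm] \dfrac{q^3+q^2-q-q(q^2-1)\alpha}{(1+(q^2-1)\alpha)\,D}, & x=0.\end{cases}\]
   Context: The chain $(X^U_t)$ on $R$: at each step an independent coin with Heads probability $\alpha$ is tossed; on Heads, $X_{t+1}=X_t+Y$ with $Y$ uniform on $R$; on Tails, $X_{t+1}=Z\cdot X_t$ with $Z$ uniform on $R$ (all independent). *)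

theory Defs
  imports "HOL-Analysis.Analysis" "HOL-Probability.Probability"
begin

definition chain_step :: "real \<Rightarrow> ('a::{field,finite})^2^2 \<Rightarrow> ('a^2^2) pmf" where
  "chain_step \<alpha> x =
     bind_pmf (bernoulli_pmf \<alpha>)
       (\<lambda>heads. if heads then map_pmf (\<lambda>y. x + y) (pmf_of_set UNIV)
                else map_pmf (\<lambda>z. z ** x) (pmf_of_set UNIV))"

definition is_stationary :: "real \<Rightarrow> (('a::{field,finite})^2^2) pmf \<Rightarrow> bool" where
  "is_stationary \<alpha> \<pi> \<longleftrightarrow> bind_pmf \<pi> (chain_step \<alpha>) = \<pi>"

end

theory Submission
  imports Defs
begin


lemma mm2: "((z::'a::comm_ring_1^2^2) ** x)$i$j = z$i$1*x$1$j + z$i$2*x$2$j"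
  by (simp add: matrix_matrix_mult_def UNIV_2)

lemma mat_eq2: "(x::'a^2^2) = y \<longleftrightarrow> x$1$1 = y$1$1 \<and> x$1$2 = y$1$2 \<and> x$2$1 = y$2$1 \<and> x$2$2 = y$2$2"
  by (auto simp: vec_eq_iff forall_2)

lemma vec_eq2: "(x::'a^2) = y \<longleftrightarrow> x$1 = y$1 \<and> x$2 = y$2"
  by (auto simp: vec_eq_iff forall_2)

lemma card_rows:
  "card {z::('a::{field,finite})^2^2. P (z$1) (z$2)} = card {(r,s). P r s}"
proof -
  have "bij_betw (\<lambda>z. (z$1, z$2)) {z::'a^2^2. P (z$1) (z$2)} {(r,s). P r s}"
    apply (rule bij_betw_byWitness[where f'="\<lambda>(r,s). vector [r,s]"])
       apply (auto simp: vec_eq_iff forall_2)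
    done
  then show ?thesis by (rule bij_betw_same_card)
qed

lemma line_eq:
  fixes w :: "'a::field^2"
  assumes "w \<noteq> 0"
  shows "{r::'a^2. r$1 * w$2 = r$2 * w$1} = range (\<lambda>k. k *s w)"
proof
  show "range (\<lambda>k. k *s w) \<subseteq> {r::'a^2. r$1 * w$2 = r$2 * w$1}" by auto
  show "{r::'a^2. r$1 * w$2 = r$2 * w$1} \<subseteq> range (\<lambda>k. k *s w)"
  proof
    fix r :: "'a^2" assume r: "r \<in> {r::'a^2. r$1 * w$2 = r$2 * w$1}"
    show "r \<in> range (\<lambda>k. k *s w)"
    proof (cases "w$1 = 0")
      case True
      then have "w$2 \<noteq> 0" using assms by (auto simp: vec_eq2)
      then have "r = (r$2 / w$2) *s w" using r True by (auto simp: vec_eq2 field_simps)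
      then show ?thesis by blast
    next
      case False
      then have "r = (r$1 / w$1) *s w" using r by (auto simp: vec_eq2 field_simps)
      then show ?thesis by blast
    qed
  qed
qed

lemma card_line:
  fixes w :: "'a::{field,finite}^2"
  assumes "w \<noteq> 0"
  shows "card {r::'a^2. r$1 * w$2 = r$2 * w$1} = CARD('a)"
proof -
  have "inj (\<lambda>k. k *s w)"
  proof (rule injI)
    fix a b assume "a *s w = b *s w"
    then have "\<forall>i. a * w$i = b * w$i" by (simp add: vec_eq_iff)
    moreover obtain i where "w$i \<noteq> 0" using assms by (auto simp: vec_eq_iff)
    ultimately show "a = b" by auto
  qed
  then show ?thesis using line_eq[OF assms] by (simp add: card_image)
qed

lemma card_Compl':
  "finite A \<Longrightarrow> card (- A) = card (UNIV :: 'a set) - card (A :: 'a set)"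
by (metis Compl_eq_Diff_UNIV card_Diff_subset top_greatest)

definition Lk :: "('a::field)^2^2 \<Rightarrow> ('a^2) set" where
  "Lk x = {r::'a^2. r$1*x$1$1 + r$2*x$2$1 = 0 \<and> r$1*x$1$2 + r$2*x$2$2 = 0}"

lemma ker_rows: "(z::('a::field)^2^2) ** x = 0 \<longleftrightarrow> z$1 \<in> Lk x \<and> z$2 \<in> Lk x"
  by (simp add: mat_eq2 mm2 Lk_def)

lemma Lk_eq:
  fixes x :: "('a::field)^2^2"
  assumes d: "det x = 0" and nz: "x \<noteq> 0"
  obtains w :: "'a^2" where "w \<noteq> 0" "Lk x = {r::'a^2. r$1 * w$2 = r$2 * w$1}"
proof (cases "x$1$1 = 0 \<and> x$2$1 = 0")
  case True
  then have w: "vector [- x$2$2, x$1$2] \<noteq> (0::'a^2)" using nz by (auto simp: vec_eq2 mat_eq2)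
  have "Lk x = {r::'a^2. r$1 * (vector [- x$2$2, x$1$2] :: 'a^2)$2 = r$2 * (vector [- x$2$2, x$1$2] :: 'a^2)$1}"
    using True by (auto simp: Lk_def algebra_simps add_eq_0_iff)
  then show ?thesis using that w by blast
next
  case False
  have d': "x$1$1 * x$2$2 = x$1$2 * x$2$1" using d by (simp add: det_2)
  have w: "vector [- x$2$1, x$1$1] \<noteq> (0::'a^2)" using False by (auto simp: vec_eq2)
  have "Lk x = {r::'a^2. r$1 * (vector [- x$2$1, x$1$1] :: 'a^2)$2 = r$2 * (vector [- x$2$1, x$1$1] :: 'a^2)$1}"
  proof (rule set_eqI)
    fix r :: "'a^2"
    show "r \<in> Lk x \<longleftrightarrow> r \<in> {r::'a^2. r$1 * (vector [- x$2$1, x$1$1] :: 'a^2)$2 = r$2 * (vector [- x$2$1, x$1$1] :: 'a^2)$1}"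
    proof (cases "x$1$1 = 0")
      case True
      then have "x$2$1 \<noteq> 0" using False by auto
      moreover have "x$1$2 = 0" using d' True \<open>x$2$1 \<noteq> 0\<close> by auto
      ultimately show ?thesis using True by (auto simp: Lk_def)
    next
      case c: False
      show ?thesis
      proof
        assume "r \<in> Lk x" then show "r \<in> {r::'a^2. r$1 * (vector [- x$2$1, x$1$1] :: 'a^2)$2 = r$2 * (vector [- x$2$1, x$1$1] :: 'a^2)$1}"
          by (auto simp: Lk_def algebra_simps add_eq_0_iff)
      next
        assume "r \<in> {r::'a^2. r$1 * (vector [- x$2$1, x$1$1] :: 'a^2)$2 = r$2 * (vector [- x$2$1, x$1$1] :: 'a^2)$1}"
        then have e: "r$1 * x$1$1 = - (r$2 * x$2$1)" by simp
        then have r1: "r$1 = - (r$2 * x$2$1) / x$1$1" using c by (simp add: field_simps)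
        have "r$1*x$1$2 + r$2*x$2$2 = r$2 * (x$1$1 * x$2$2 - x$1$2 * x$2$1) / x$1$1"
          using c by (simp add: r1 field_simps)
        also have "\<dots> = 0" using d' by simp
        finally show "r \<in> Lk x" using e by (simp add: Lk_def algebra_simps add_eq_0_iff)
      qed
    qed
  qed
  then show ?thesis using that w by blast
qed

lemma card_ker:
  fixes x :: "('a::{field,finite})^2^2"
  assumes d: "det x = 0" and nz: "x \<noteq> 0"
  shows "card {z::'a^2^2. z ** x = 0} = CARD('a)^2"
proof -
  obtain w :: "'a^2" where w: "w \<noteq> 0" "Lk x = {r::'a^2. r$1 * w$2 = r$2 * w$1}"
    using Lk_eq[OF d nz] by blast
  have "card {z::'a^2^2. z ** x = 0} = card {(r,s). r \<in> Lk x \<and> s \<in> Lk x}"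
  proof -
    have "{z::'a^2^2. z ** x = 0} = {z::'a^2^2. z$1 \<in> Lk x \<and> z$2 \<in> Lk x}" using ker_rows by blast
    then show ?thesis using card_rows[of "\<lambda>(r::'a^2) (s::'a^2). r \<in> Lk x \<and> s \<in> Lk x"] by simp
  qed
  also have "{(r,s). r \<in> Lk x \<and> s \<in> Lk x} = Lk x \<times> Lk x" by auto
  also have "card \<dots> = CARD('a)^2" using card_line[OF w(1)] w(2) by (simp add: card_cartesian_product power2_eq_square)
  finally show ?thesis .
qed

lemma card_inv:
  "card {x::('a::{field,finite})^2^2. invertible x} = (CARD('a)^2 - 1) * (CARD('a)^2 - CARD('a))"
proof -
  have "card {x::'a^2^2. invertible x} = card {(r::'a^2,s::'a^2). r$1 * s$2 - r$2 * s$1 \<noteq> (0::'a)}"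
    using card_rows[of "\<lambda>(r::'a^2) (s::'a^2). r$1 * s$2 - r$2 * s$1 \<noteq> (0::'a)"] by (simp add: invertible_det_nz det_2)
  also have "{(r::'a^2,s::'a^2). r$1 * s$2 - r$2 * s$1 \<noteq> (0::'a)} = Sigma (-{0}) (\<lambda>r. - {s::'a^2. s$1 * r$2 = s$2 * r$1})"
    by (auto simp: vec_eq2 algebra_simps)
  also have "card \<dots> = (\<Sum>r\<in>-{0::'a^2}. card (- {s::'a^2. s$1 * r$2 = s$2 * r$1}))"
    by (rule card_SigmaI) auto
  also have "\<dots> = (\<Sum>r\<in>-{0::'a^2}. CARD('a)^2 - CARD('a))"
  proof (rule sum.cong)
    fix r :: "'a^2" assume "r \<in> -{0}"
    then have "card {s::'a^2. s$1 * r$2 = s$2 * r$1} = CARD('a)" by (intro card_line) auto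
    then show "card (- {s::'a^2. s$1 * r$2 = s$2 * r$1}) = CARD('a)^2 - CARD('a)"
      by (simp add: card_Compl')
  qed simp
  also have "\<dots> = (CARD('a)^2 - 1) * (CARD('a)^2 - CARD('a))"
    by (simp add: card_Compl')
  finally show ?thesis .
qed

lemma mm_add_r: "((a::'a::comm_ring_1^2^2) + b) ** (x::'a^2^2) = a ** x + b ** x"
  by (simp add: mat_eq2 mm2 algebra_simps)

lemma mm_sub_r: "((a::'a::comm_ring_1^2^2) - b) ** (x::'a^2^2) = a ** x - b ** x"
  by (simp add: mat_eq2 mm2 algebra_simps)

lemma pmf_map_unif:
  "pmf (map_pmf f (pmf_of_set (UNIV::('b::finite) set))) y = real (card {z. f z = y}) / real CARD('b)"
  by (simp add: pmf_map measure_pmf_of_set vimage_def)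

lemma step_pmf:
  fixes x y :: "('a::{field,finite})^2^2"
  assumes "0 \<le> \<alpha>" "\<alpha> \<le> 1"
  shows "pmf (chain_step \<alpha> x) y = \<alpha> / real CARD('a^2^2) + (1 - \<alpha>) * real (card {z::'a^2^2. z ** x = y}) / real CARD('a^2^2)"
proof -
  have "{z. x + z = y} = {y - x}" by (auto simp: algebra_simps)
  then show ?thesis using assms
    by (simp add: chain_step_def pmf_bind pmf_map_unif)
qed

lemma stat_eq:
  fixes \<pi> :: "(('a::{field,finite})^2^2) pmf"
  assumes "0 \<le> \<alpha>" "\<alpha> \<le> 1" "is_stationary \<alpha> \<pi>"
  shows "pmf \<pi> y = \<alpha> / real CARD('a^2^2) + (1 - \<alpha>) / real CARD('a^2^2) * (\<Sum>x\<in>UNIV. pmf \<pi> x * real (card {z::'a^2^2. z ** x = y}))"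
proof -
  have "pmf \<pi> y = pmf (bind_pmf \<pi> (chain_step \<alpha>)) y" using assms(3) by (simp add: is_stationary_def)
  also have "\<dots> = (\<Sum>x\<in>UNIV. pmf (chain_step \<alpha> x) y * pmf \<pi> x)"
    unfolding pmf_bind by (rule integral_measure_pmf_real) auto
  also have "\<dots> = (\<Sum>x\<in>UNIV. \<alpha> / real CARD('a^2^2) * pmf \<pi> x + (1 - \<alpha>) / real CARD('a^2^2) * (pmf \<pi> x * real (card {z::'a^2^2. z ** x = y})))"
    by (intro sum.cong refl) (simp add: step_pmf[OF assms(1,2)] field_simps)
  also have "\<dots> = \<alpha> / real CARD('a^2^2) * (\<Sum>x\<in>UNIV. pmf \<pi> x) + (1 - \<alpha>) / real CARD('a^2^2) * (\<Sum>x\<in>UNIV. pmf \<pi> x * real (card {z::'a^2^2. z ** x = y}))"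
    by (simp add: sum.distrib sum_distrib_left)
  also have "(\<Sum>x\<in>UNIV. pmf \<pi> x) = 1" by (rule sum_pmf_eq_1) auto
  finally show ?thesis by simp
qed

definition Img :: "('a::field)^2^2 \<Rightarrow> ('a^2^2) set" where
  "Img x = range (\<lambda>z::'a^2^2. z ** x)"

lemma fiber_card:
  fixes x y :: "('a::{field,finite})^2^2"
  shows "card {z::'a^2^2. z ** x = y} = (if y \<in> Img x then card {z::'a^2^2. z ** x = 0} else 0)"
proof (cases "y \<in> Img x")
  case True
  then obtain z0 :: "'a^2^2" where z0: "z0 ** x = y" by (auto simp: Img_def)
  have "{z::'a^2^2. z ** x = y} = (\<lambda>z. z + z0) ` {z::'a^2^2. z ** x = 0}"
  proof (rule set_eqI, rule iffI)
    fix z :: "'a^2^2" assume "z \<in> {z. z ** x = y}"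
    then have "(z - z0) ** x = 0" using z0 by (simp add: mm_sub_r)
    then show "z \<in> (\<lambda>z. z + z0) ` {z::'a^2^2. z ** x = 0}" by (intro image_eqI[of _ _ "z - z0"]) auto
  next
    fix z :: "'a^2^2" assume "z \<in> (\<lambda>z. z + z0) ` {z::'a^2^2. z ** x = 0}"
    then show "z \<in> {z. z ** x = y}" using z0 by (auto simp: mm_add_r)
  qed
  moreover have "inj (\<lambda>z::'a^2^2. z + z0)" by (rule injI) simp
  ultimately show ?thesis using True by (simp add: card_image inj_on_def)
next
  case False
  then have "{z::'a^2^2. z ** x = y} = {}" by (auto simp: Img_def)
  then show ?thesis using False by simp
qed

lemma card_Im:
  fixes x :: "('a::{field,finite})^2^2"
  shows "card (Img x) * card {z::'a^2^2. z ** x = 0} = CARD('a^2^2)"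
proof -
  have "CARD('a^2^2) = (\<Sum>y\<in>UNIV. card {z::'a^2^2. z ** x = y})"
    using sum.group[of "UNIV::('a^2^2) set" "UNIV::('a^2^2) set" "\<lambda>z. z ** x" "\<lambda>_. (1::nat)"]
    by simp
  also have "\<dots> = (\<Sum>y\<in>UNIV. if y \<in> Img x then card {z::'a^2^2. z ** x = 0} else 0)"
    by (simp add: fiber_card)
  also have "\<dots> = card (Img x) * card {z::'a^2^2. z ** x = 0}"
    by (simp add: sum.If_cases Int_absorb1)
  finally show ?thesis by simp
qed

lemma det_mm_zero: "det (y::('a::field)^2^2) = 0 \<Longrightarrow> det ((z::'a^2^2) ** y) = 0"
  by (simp add: det_mul)

lemma inv_fiber:
  fixes x y :: "('a::{field,finite})^2^2"
  assumes "invertible x"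
  shows "card {z::'a^2^2. z ** x = y} = 1"
proof -
  obtain xi :: "'a^2^2" where xi: "x ** xi = mat 1" "xi ** x = mat 1"
    using assms unfolding invertible_def by blast
  have "{z::'a^2^2. z ** x = y} = {y ** xi}"
  proof (rule set_eqI, rule iffI)
    fix z :: "'a^2^2" assume "z \<in> {z. z ** x = y}"
    then have "z ** x ** xi = y ** xi" by simp
    then show "z \<in> {y ** xi}" by (simp add: matrix_mul_assoc[symmetric] xi(1) matrix_mul_rid)
  next
    fix z :: "'a^2^2" assume "z \<in> {y ** xi}"
    then show "z \<in> {z. z ** x = y}" by (simp add: matrix_mul_assoc[symmetric] xi(2) matrix_mul_rid)
  qed
  then show ?thesis by simp
qed

lemma sing_fiber:
  fixes x y :: "('a::{field,finite})^2^2"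
  assumes "invertible y" "\<not> invertible x"
  shows "card {z::'a^2^2. z ** x = y} = 0"
proof -
  have "{z::'a^2^2. z ** x = y} = {}"
    using assms det_mm_zero[of x] by (auto simp: invertible_det_nz)
  then show ?thesis by simp
qed

lemma mm_zero_r: "(z::('a::comm_ring_1)^2^2) ** (0::'a^2^2) = 0"
  by (simp add: mat_eq2 mm2)

lemma mm_zero_l: "(0::('a::comm_ring_1)^2^2) ** (z::'a^2^2) = 0"
  by (simp add: mat_eq2 mm2)

lemma zero_Im: "(0::('a::field)^2^2) \<in> Img y"
  unfolding Img_def using mm_zero_l[of y] by (metis rangeI)

lemma self_Im: "(y::('a::field)^2^2) \<in> Img y"
  unfolding Img_def by (metis matrix_mul_lid rangeI)

lemma Im_sub: "(x::('a::field)^2^2) \<in> Img y \<Longrightarrow> Img x \<subseteq> Img y"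
proof
  fix w assume x: "x \<in> Img y" and w: "w \<in> Img x"
  from x obtain a where a: "x = a ** y" by (auto simp: Img_def)
  from w obtain b where b: "w = b ** x" by (auto simp: Img_def)
  have "w = (b ** a) ** y" using a b by (simp add: matrix_mul_assoc)
  then show "w \<in> Img y" by (auto simp: Img_def)
qed

lemma card_Im_R1:
  fixes x :: "('a::{field,finite})^2^2"
  assumes "x \<noteq> 0" "\<not> invertible x"
  shows "card (Img x) = CARD('a)^2"
proof -
  have h: "card (Img x) * CARD('a)^2 = CARD('a)^4"
    using card_Im[of x] card_ker[of x] assms by (simp add: invertible_det_nz flip: power_mult)
  have hq: "CARD('a)^4 = CARD('a)^2 * CARD('a)^2" by (simp flip: power_add)
  have e: "card (Img x) * CARD('a)^2 = CARD('a)^2 * CARD('a)^2" using trans[OF h hq] .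
  have "CARD('a)^2 \<noteq> 0" by simp
  then show ?thesis using e mult_right_cancel by blast
qed

lemma Im_eq:
  fixes x y :: "('a::{field,finite})^2^2"
  assumes "x \<noteq> 0" "\<not> invertible x" "y \<noteq> 0" "\<not> invertible y" "x \<in> Img y"
  shows "Img x = Img y"
  using Im_sub[OF assms(5)] card_Im_R1[OF assms(1,2)] card_Im_R1[OF assms(3,4)]
  by (intro card_subset_eq) auto

lemma Im_sing: "(x::('a::field)^2^2) \<in> Img y \<Longrightarrow> \<not> invertible y \<Longrightarrow> \<not> invertible x"
  unfolding Img_def using det_mm_zero by (auto simp: invertible_det_nz)

lemma R1_fiber:
  fixes x y :: "('a::{field,finite})^2^2"
  assumes "x \<noteq> 0" "\<not> invertible x" "y \<noteq> 0" "\<not> invertible y"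
  shows "card {z::'a^2^2. z ** x = y} = (if x \<in> Img y then CARD('a)^2 else 0)"
proof -
  have "y \<in> Img x \<longleftrightarrow> x \<in> Img y"
    using Im_eq[OF assms] Im_eq[OF assms(3,4,1,2)] self_Im[of x] self_Im[of y] by blast
  then show ?thesis using fiber_card[of x y] card_ker[of x] assms by (simp add: invertible_det_nz)
qed


lemma frac_aux: "(K::real) \<noteq> 0 \<Longrightarrow> D \<noteq> 0 \<Longrightarrow> 1 - X * (a / D) - Y * (Z / (K * D)) = (K * D - X * a * K - Y * Z) / (K * D)"
  by (simp add: field_simps)

theorem proposition5p2:
  fixes \<alpha> :: real and \<pi> :: "(('a::{field,finite})^2^2) pmf" and x :: "'a^2^2"
  assumes "CARD('a) > 2" and "0 < \<alpha>" and "\<alpha> < 1" and "is_stationary \<alpha> \<pi>"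
  defines "q \<equiv> real CARD('a)"
  defines "D \<equiv> q^3 + q^2 - q + (q^2 - 1) * (q^2 - q) * \<alpha>"
  shows "pmf \<pi> x =
    (if invertible x then \<alpha> / D
     else if x \<noteq> 0 then q^2 * \<alpha> / ((1 + (q^2 - 1) * \<alpha>) * D)
     else (q^3 + q^2 - q - q * (q^2 - 1) * \<alpha>) / ((1 + (q^2 - 1) * \<alpha>) * D))"
proof -
  have q2: "q > 2" using assms(1) unfolding q_def by simp
  define N where "N = real CARD('a^2^2)"
  have N: "N = q^4" unfolding N_def q_def by (simp flip: power_mult)
  define U where "U = {x::'a^2^2. invertible x}"
  have G: "real (card U) = (q^2 - 1) * (q^2 - q)"
  proof -
    have "CARD('a)^2 \<ge> 1" "CARD('a)^2 \<ge> CARD('a)" using assms(1)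
      by (simp_all add: power2_eq_square)
    then show ?thesis unfolding U_def card_inv q_def by (simp add: of_nat_diff)
  qed
  have st: "\<And>y. pmf \<pi> y = \<alpha> / N + (1 - \<alpha>) / N * (\<Sum>x\<in>UNIV. pmf \<pi> x * real (card {z::'a^2^2. z ** x = y}))"
    unfolding N_def by (rule stat_eq[OF _ _ assms(4)]) (use assms(2,3) in auto)
  define u where "u = (\<Sum>x\<in>U. pmf \<pi> x)"
  define A where "A = \<alpha> / N + (1 - \<alpha>) / N * u"
  have PU: "pmf \<pi> y = A" if "invertible y" for y
  proof -
    have "(\<Sum>x\<in>UNIV. pmf \<pi> x * real (card {z::'a^2^2. z ** x = y})) = (\<Sum>x\<in>UNIV. if x \<in> U then pmf \<pi> x else 0)"
      by (intro sum.cong refl) (auto simp: U_def inv_fiber sing_fiber that)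
    also have "\<dots> = u" unfolding u_def by (simp add: sum.If_cases)
    finally show ?thesis using st[of y] unfolding A_def by simp
  qed
  have uU: "u = real (card U) * A" unfolding u_def using PU by (simp add: U_def)
  from A_def have "A = \<alpha> / N + (1 - \<alpha>) / N * (real (card U) * A)" by (simp only: uU)
  then have Aeq: "A = \<alpha> / N + (1 - \<alpha>) / N * ((q^2 - 1) * (q^2 - q)) * A"
    by (simp only: G mult.assoc)
  have Npos: "N > 0" using N q2 by simp
  have DN: "N - (1 - \<alpha>) * ((q^2 - 1) * (q^2 - q)) = D" unfolding D_def N by (simp add: algebra_simps power2_eq_square power3_eq_cube power4_eq_xxxx)
  have Dpos: "D > 0"
  proof -
    have "q^2 - q > 0" using q2 by (simp add: power2_eq_square)
    moreover have "q^2 - 1 > 0" using q2 \<open>q^2 - q > 0\<close> by linarith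
    moreover have "q^3 > 0" using q2 by simp
    ultimately have h: "(q^2 - 1) * (q^2 - q) * \<alpha> \<ge> 0" using assms(2) by simp
    show ?thesis unfolding D_def using h \<open>q^2 - q > 0\<close> \<open>q^3 > 0\<close> by linarith
  qed
  have "A * N = A * N" ..
  have "A * (N - (1 - \<alpha>) * ((q^2 - 1) * (q^2 - q))) = \<alpha>"
  proof -
    have "A * N = (\<alpha> / N + (1 - \<alpha>) / N * ((q^2 - 1) * (q^2 - q)) * A) * N" using Aeq by simp
    also have "\<dots> = \<alpha> + (1 - \<alpha>) * ((q^2 - 1) * (q^2 - q)) * A" using Npos by (simp add: field_simps)
    finally show ?thesis by (simp add: algebra_simps)
  qed
  then have "A * D = \<alpha>" unfolding DN .
  then have Aval: "A = \<alpha> / D" using Dpos by (simp add: field_simps)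
  define E where "E y = Img y - {0}" for y :: "'a^2^2"
  define m where "m y = (\<Sum>x\<in>E y. pmf \<pi> x)" for y
  have qq: "real (CARD('a)^2) = q^2" unfolding q_def by simp
  have PR: "pmf \<pi> y = A + (1 - \<alpha>) / q^2 * m y" if y: "y \<noteq> 0" "\<not> invertible y" for y
  proof -
    have "(\<Sum>x\<in>UNIV. pmf \<pi> x * real (card {z::'a^2^2. z ** x = y}))
        = (\<Sum>x\<in>UNIV. (if x \<in> U then pmf \<pi> x else 0) + q^2 * (if x \<in> E y then pmf \<pi> x else 0))"
    proof (intro sum.cong refl)
      fix x :: "'a^2^2"
      consider "invertible x" | "x = 0" | "x \<noteq> 0 \<and> \<not> invertible x" by blast
      then show "pmf \<pi> x * real (card {z::'a^2^2. z ** x = y}) = (if x \<in> U then pmf \<pi> x else 0) + q^2 * (if x \<in> E y then pmf \<pi> x else 0)"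
      proof cases
        case 1
        then have "x \<notin> E y" using Im_sing[of x y] y by (auto simp: E_def)
        then show ?thesis using 1 by (simp add: inv_fiber U_def)
      next
        case 2
        have "{z::'a^2^2. z ** x = y} = {}" using 2 y mm_zero_r by auto
        moreover have "\<not> invertible x" using 2 by (simp add: invertible_det_nz det_2)
        ultimately show ?thesis using 2 by (simp add: U_def E_def)
      next
        case 3
        then show ?thesis using R1_fiber[of x y] y qq by (simp add: U_def E_def)
      qed
    qed
    also have "\<dots> = u + q^2 * m y"
      by (simp add: sum.distrib sum_distrib_left[symmetric] sum.If_cases u_def m_def)
    finally have "pmf \<pi> y = \<alpha> / N + (1 - \<alpha>) / N * (u + q^2 * m y)" using st[of y] by simp
    also have "\<dots> = A + (1 - \<alpha>) / q^2 * m y" unfolding A_def N using q2 by (simp add: field_simps power4_eq_xxxx power2_eq_square)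
    finally show ?thesis .
  qed
  have ER1: "y' \<noteq> 0 \<and> \<not> invertible y'" if "y' \<in> E y" "\<not> invertible y" for y y'
    using that Im_sing[of y' y] by (auto simp: E_def)
  have Ecard: "real (card (E y)) = q^2 - 1" if "y \<noteq> 0" "\<not> invertible y" for y
  proof -
    have "card (E y) = CARD('a)^2 - 1" unfolding E_def using card_Im_R1[OF that] zero_Im[of y]
      by (simp add: card_Diff_singleton)
    moreover have "CARD('a)^2 \<ge> 1" using assms(1) by (simp add: power2_eq_square)
    ultimately show ?thesis using qq by (simp add: of_nat_diff)
  qed
  define B where "B = q^2 * \<alpha> / ((1 + (q^2 - 1) * \<alpha>) * D)"
  have Bpos: "1 + (q^2 - 1) * \<alpha> > 0"
  proof -
    have "q^2 - 1 > 0" using q2 by (simp add: power2_eq_square) (smt (verit) mult_le_cancel_left1)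
    then show ?thesis using assms(2) by (simp add: add_pos_nonneg)
  qed
  have PB: "pmf \<pi> y = B" if y: "y \<noteq> 0" "\<not> invertible y" for y
  proof -
    have "m y = (\<Sum>x\<in>E y. pmf \<pi> x)" by (simp add: m_def)
    also have "\<dots> = (\<Sum>x\<in>E y. A + (1 - \<alpha>) / q^2 * m y)"
    proof (intro sum.cong refl)
      fix x assume x: "x \<in> E y"
      then have x1: "x \<noteq> 0" "\<not> invertible x" using ER1 y by auto
      have "x \<in> Img y" using x by (simp add: E_def)
      then have "Img x = Img y" using Im_eq[OF x1 y] by simp
      then have "m x = m y" by (simp add: m_def E_def)
      then show "pmf \<pi> x = A + (1 - \<alpha>) / q^2 * m y" using PR[OF x1] by simp
    qed
    also have "\<dots> = (q^2 - 1) * (A + (1 - \<alpha>) / q^2 * m y)" using Ecard[OF y] by simp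
    finally have my: "m y = (q^2 - 1) * (A + (1 - \<alpha>) / q^2 * m y)" .
    have py: "pmf \<pi> y = A + (1 - \<alpha>) / q^2 * m y" using PR[OF y] .
    have m2: "m y = (q^2 - 1) * pmf \<pi> y" using my py by simp
    have "pmf \<pi> y * q^2 = A * q^2 + (1 - \<alpha>) * (q^2 - 1) * pmf \<pi> y"
      using py m2 q2 by (simp add: field_simps)
    then have "pmf \<pi> y * (1 + (q^2 - 1) * \<alpha>) = A * q^2"
      by (simp add: algebra_simps)
    then have "pmf \<pi> y = A * q^2 / (1 + (q^2 - 1) * \<alpha>)"
      using Bpos by (simp add: field_simps)
    then show ?thesis unfolding B_def Aval using Bpos Dpos by (simp add: field_simps)
  qed
  define R where "R = {x::'a^2^2. x \<noteq> 0 \<and> \<not> invertible x}"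
  have z0: "(0::'a^2^2) \<notin> U" by (simp add: U_def invertible_det_nz det_2)
  have RU: "-U - {0} = R" by (auto simp: U_def R_def)
  have "1 = (\<Sum>x\<in>UNIV. pmf \<pi> x)" by (rule sum_pmf_eq_1[symmetric]) auto
  also have "\<dots> = (\<Sum>x\<in>U. pmf \<pi> x) + (\<Sum>x\<in>-U. pmf \<pi> x)"
    using sum.Int_Diff[of "UNIV::('a^2^2) set" "pmf \<pi>" U] by (simp add: Compl_eq_Diff_UNIV)
  also have "(\<Sum>x\<in>-U. pmf \<pi> x) = pmf \<pi> 0 + (\<Sum>x\<in>R. pmf \<pi> x)"
    using sum.remove[of "-U" 0 "pmf \<pi>"] z0 RU by simp
  also have "(\<Sum>x\<in>R. pmf \<pi> x) = real (card R) * B" using PB by (simp add: R_def)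
  also have "(\<Sum>x\<in>U. pmf \<pi> x) = real (card U) * A" using PU by (simp add: U_def)
  finally have tot: "1 = real (card U) * A + (pmf \<pi> 0 + real (card R) * B)" .
  have cR: "real (card R) = q^4 - (q^2 - 1) * (q^2 - q) - 1"
  proof -
    have "card (-U) = CARD('a^2^2) - card U" by (rule card_Compl') simp
    moreover have "card R = card (-U) - 1" using RU z0 by (metis card_Diff_singleton ComplI finite)
    moreover have "card U < CARD('a^2^2)" using z0 by (metis UNIV_I finite psubsetI psubset_card_mono subset_UNIV)
    ultimately have "card R = CARD('a^2^2) - card U - 1" by simp
    then have "real (card R) = N - real (card U) - 1"
      using \<open>card U < CARD('a^2^2)\<close> unfolding N_def by (simp add: of_nat_diff)
    then show ?thesis using N G by simp
  qed
  have P0: "pmf \<pi> 0 = 1 - (q^2 - 1) * (q^2 - q) * A - (q^4 - (q^2 - 1) * (q^2 - q) - 1) * B"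
    using tot G cR by simp
  show ?thesis
  proof (cases "invertible x")
    case True then show ?thesis using PU Aval by simp
  next
    case False
    show ?thesis
    proof (cases "x = 0")
      case False
      then show ?thesis using PB[of x] \<open>\<not> invertible x\<close> unfolding B_def by simp
    next
      case True
      have inv0: "\<not> invertible x" by fact
      have "pmf \<pi> x = 1 - (q^2 - 1) * (q^2 - q) * (\<alpha> / D) - (q^4 - (q^2 - 1) * (q^2 - q) - 1) * (q^2 * \<alpha> / ((1 + (q^2 - 1) * \<alpha>) * D))"
        using P0 True Aval unfolding B_def by simp
      also have "\<dots> = (((1 + (q^2 - 1) * \<alpha>) * D) - (q^2 - 1) * (q^2 - q) * \<alpha> * (1 + (q^2 - 1) * \<alpha>) - (q^4 - (q^2 - 1) * (q^2 - q) - 1) * (q^2 * \<alpha>)) / ((1 + (q^2 - 1) * \<alpha>) * D)"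
        using Bpos Dpos by (intro frac_aux) auto
      also have "((1 + (q^2 - 1) * \<alpha>) * D) - (q^2 - 1) * (q^2 - q) * \<alpha> * (1 + (q^2 - 1) * \<alpha>) - (q^4 - (q^2 - 1) * (q^2 - q) - 1) * (q^2 * \<alpha>) = q^3 + q^2 - q - q * (q^2 - 1) * \<alpha>"
        unfolding D_def by algebra
      finally show ?thesis using True inv0 by simp
    qed
  qed
qed

end
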